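(* A $\rho$-shifted weight $\lambda\in X+\rho$ is called atypical if $(\lambda,\beta)=0$ for some $\beta\in\{\delta\pm\epsilon_i:i=1,2,3\}$. For $k\in\mathbb N$ let $\mathrm{WT}_k=\{\sigma(f_{k,n}):\sigma\in W,\ n\in\mathbb N\}$. Then the sets $\mathrm{WT}_k$ ($k\in\mathbb N$) are pairwise disjoint and their union is exactly the set of atypical weights in $X+\rho$; in particular every atypical weight is $W$-conjugate to some $f_{k,n}$.
   Context: $\mathfrak g=G(3)$, the 31-dimensional exceptional simple complex Lie superalgebra with $\mathfrak g_{\bar0}=G_2\oplus\mathfrak{sl}_2$. The dual $\mathfrak h^*$ of its Cartan subalgebra is spanned by $\delta,\epsilon_1,\epsilon_2,\epsilon_3$ subject to $\epsilon_1+\epsilon_2+\epsilon_3=0$, with bilinear form $(\delta,\delta)=-2$, $(\delta,\epsilon_i)=0$, $(\epsilon_i,\epsilon_i)=2$, $(\epsilon_i,\epsilon_j)=-1$ ($i\ne j$). Simple roots $\epsilon_2-\epsilon_1,\ \epsilon_1,\ \delta+\epsilon_3$; positive even roots $2\delta,\epsilon_1,\epsilon_2,-\epsilon_3,\epsilon_2-\epsilon_1,\epsilon_1-\epsilon_3,\epsilon_2-\epsilon_3$; positive odd roots $\delta,\ \delta\pm\epsilon_i$ ($i=1,2,3$). $\rho=-\tfrac52\delta+2\epsilon_1+3\epsilon_2$, and $X=\mathbb Z\delta\oplus\mathbb Z\epsilon_1\oplus\mathbb Z\epsilon_2$ is the integral weight lattice. The Weyl group $W=\langle s_0\rangle\times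 W_2$ acts linearly on $\mathfrak h^*$: $s_0$ sends $\delta\mapsto-\delta$ and fixes the $\epsilon_i$; $W_2$ (Weyl group of $G_2$, dihedral of order 12) fixes $\delta$ and is generated by $s_1$ (swaps $\epsilon_1,\epsilon_2$, fixes $\epsilon_3$) and $s_2$ ($\epsilon_1\mapsto-\epsilon_1$, $\epsilon_2\mapsto-\epsilon_3$, $\epsilon_3\mapsto-\epsilon_2$). For $k,n\in\mathbb N$ the anti-dominant weights $f_{k,n}\in X+\rho$ are: $f_{k,n}=-\tfrac{2n+1}{2}\delta-(n+k+1)\epsilon_1-(2k+1)\epsilon_2$ for $0\le n\le k-1$; $f_{k,k}=-\tfrac{2k+1}{2}\delta-(2k+1)\epsilon_1-(2k+1)\epsilon_2$; $f_{k,n}=-\tfrac{2n+1}{2}\delta-(2k+1)\epsilon_1-(n+k+1)\epsilon_2$ for $k+1\le n\le 3k$; $f_{k,3k+1}=-\tfrac{6k+3}{2}\delta-(2k+1)\epsilon_1-(4k+2)\epsilon_2$; $f_{k,n}=-\tfrac{2n+1}{2}\delta-(n-k)\epsilon_1-(n+k+1)\epsilon_2$ for $n\ge 3k+2$. *)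

theory Defs
  imports Main "HOL.Rat"
begin

text \<open>Weights in h* are written in coordinates (a, b, c) meaning
  a*delta + b*eps1 + c*eps2 (eps3 = -eps1 - eps2).\<close>

type_synonym wt = "rat \<times> rat \<times> rat"

definition delta :: wt where "delta = (1, 0, 0)"
definition eps1 :: wt where "eps1 = (0, 1, 0)"
definition eps2 :: wt where "eps2 = (0, 0, 1)"
definition eps3 :: wt where "eps3 = (0, -1, -1)"

definition wadd :: "wt \<Rightarrow> wt \<Rightarrow> wt" where
  "wadd x y = (case x of (a, b, c) \<Rightarrow> case y of (a', b', c') \<Rightarrow> (a + a', b + b', c + c'))"
definition wneg :: "wt \<Rightarrow> wt" where
  "wneg x = (case x of (a, b, c) \<Rightarrow> (-a, -b, -c))"

text \<open>Bilinear form: (delta,delta) = -2, (delta,eps_i) = 0, (eps_i,eps_i) = 2,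
  (eps_i,eps_j) = -1 for i \<noteq> j.\<close>
definition form :: "wt \<Rightarrow> wt \<Rightarrow> rat" where
  "form x y = (case x of (a, b, c) \<Rightarrow> case y of (a', b', c') \<Rightarrow>
      -2*a*a' + 2*b*b' + 2*c*c' - b*c' - c*b')"

definition rho :: wt where "rho = (-5/2, 2, 3)"

definition Xrho :: "wt set" where
  "Xrho = {wadd (of_int i, of_int j, of_int k) rho | i j k. True}"

text \<open>Generators of the Weyl group, acting linearly.
  s0: delta -> -delta, fixes eps_i.
  s1: swaps eps1, eps2.
  s2: eps1 -> -eps1, eps2 -> -eps3 = eps1 + eps2.\<close>
definition s0 :: "wt \<Rightarrow> wt" where "s0 x = (case x of (a, b, c) \<Rightarrow> (-a, b, c))"
definition s1 :: "wt \<Rightarrow> wt" where "s1 x = (case x of (a, b, c) \<Rightarrow> (a, c, b))"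
definition s2 :: "wt \<Rightarrow> wt" where "s2 x = (case x of (a, b, c) \<Rightarrow> (a, c - b, c))"

text \<open>The Weyl group W = <s0> x W2 = group generated by s0, s1, s2
  (a finite group, so the generated monoid is the generated group).\<close>
inductive_set WeylG :: "(wt \<Rightarrow> wt) set" where
  WeylG_id: "id \<in> WeylG"
| WeylG_s0: "w \<in> WeylG \<Longrightarrow> s0 \<circ> w \<in> WeylG"
| WeylG_s1: "w \<in> WeylG \<Longrightarrow> s1 \<circ> w \<in> WeylG"
| WeylG_s2: "w \<in> WeylG \<Longrightarrow> s2 \<circ> w \<in> WeylG"

definition odd_isotropic :: "wt set" where
  "odd_isotropic = {wadd delta e | e. e \<in> {eps1, eps2, eps3}}
                 \<union> {wadd delta (wneg e) | e. e \<in> {eps1, eps2, eps3}}"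

definition atypical :: "wt \<Rightarrow> bool" where
  "atypical l \<longleftrightarrow> l \<in> Xrho \<and> (\<exists>\<beta>\<in>odd_isotropic. form l \<beta> = 0)"

definition f :: "nat \<Rightarrow> nat \<Rightarrow> wt" where
  "f k n =
    (let a = - (2 * of_nat n + 1) / 2 in
     if n \<le> k - 1 \<and> n < k then (a, - (of_nat n + of_nat k + 1), - (2 * of_nat k + 1))
     else if n = k then (a, - (2 * of_nat k + 1), - (2 * of_nat k + 1))
     else if n \<le> 3 * k then (a, - (2 * of_nat k + 1), - (of_nat n + of_nat k + 1))
     else if n = 3 * k + 1 then (a, - (2 * of_nat k + 1), - (4 * of_nat k + 2))
     else (a, - (of_nat n - of_nat k), - (of_nat n + of_nat k + 1)))"

definition WT :: "nat \<Rightarrow> wt set" where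
  "WT k = {\<sigma> (f k n) | \<sigma> n. \<sigma> \<in> WeylG}"

end

theory Submission
  imports Defs
begin

lemma s0_simp[simp]: "s0 (a,b,c) = (-a,b,c)" by (simp add: s0_def)
lemma s1_simp[simp]: "s1 (a,b,c) = (a,c,b)" by (simp add: s1_def)
lemma s2_simp[simp]: "s2 (a,b,c) = (a,c-b,c)" by (simp add: s2_def)

lemma WeylG_inv:
  assumes "\<And>x. P (s0 x) = P x" "\<And>x. P (s1 x) = P x" "\<And>x. P (s2 x) = P x" "\<sigma> \<in> WeylG"
  shows "P (\<sigma> x) = P x"
  using assms(4) by induct (auto simp: assms(1-3))

definition XR :: "wt \<Rightarrow> bool" where
  "XR l \<longleftrightarrow> (\<exists>i j k::int. l = (of_int i + 1/2, of_int j, of_int k))"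

lemma Xrho_XR: "l \<in> Xrho \<longleftrightarrow> XR l"
proof
  assume "l \<in> Xrho"
  then obtain i j k where "l = wadd (of_int i, of_int j, of_int k) rho" unfolding Xrho_def by blast
  then have "l = (of_int (i-3) + 1/2, of_int (j+2), of_int (k+3))"
    by (simp add: wadd_def rho_def)
  then show "XR l" unfolding XR_def by blast
next
  assume "XR l"
  then obtain i j k::int where "l = (of_int i + 1/2, of_int j, of_int k)" unfolding XR_def by blast
  then have "l = wadd (of_int (i+3), of_int (j-2), of_int (k-3)) rho"
    by (simp add: wadd_def rho_def)
  then show "l \<in> Xrho" unfolding Xrho_def by blast
qed

lemma XR_s0: "XR (s0 x) = XR x"
proof -
  obtain a b c where x: "x = (a,b,c)" by (cases x) auto
  have "XR (-a,b,c) \<Longrightarrow> XR (a,b,c)" for a b c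
  proof -
    assume "XR (-a,b,c)"
    then obtain i j k :: int where "(-a,b,c) = (of_int i + 1/2, of_int j, of_int k)" unfolding XR_def by blast
    then have "(a,b,c) = (of_int (-i-1) + 1/2, of_int j, of_int k)" by simp
    then show ?thesis unfolding XR_def by blast
  qed
  from this[of a b c] this[of "-a" b c] have "XR (-a,b,c) = XR (a,b,c)" by auto
  then show ?thesis by (simp add: x)
qed

lemma XR_s1: "XR (s1 x) = XR x"
  by (cases x) (auto simp: XR_def)

lemma XR_s2: "XR (s2 x) = XR x"
proof -
  obtain a b c where x: "x = (a,b,c)" by (cases x) auto
  have 1: "XR (a,c-b,c) \<Longrightarrow> XR (a,b,c)" for a b c
  proof -
    assume "XR (a,c-b,c)"
    then obtain i j k :: int where "(a,c-b,c) = (of_int i + 1/2, of_int j, of_int k)" unfolding XR_def by blast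
    then have "(a,b,c) = (of_int i + 1/2, of_int (k-j), of_int k)" by auto
    then show ?thesis unfolding XR_def by blast
  qed
  have 2: "XR (a,b,c) \<Longrightarrow> XR (a,c-b,c)" for a b c
  proof -
    assume "XR (a,b,c)"
    then obtain i j k :: int where "(a,b,c) = (of_int i + 1/2, of_int j, of_int k)" unfolding XR_def by blast
    then have "(a,c-b,c) = (of_int i + 1/2, of_int (k-j), of_int k)" by auto
    then show ?thesis unfolding XR_def by blast
  qed
  have "XR (a,c-b,c) = XR (a,b,c)" using 1[where a=a and b=b and c=c] 2[where a=a and b=b and c=c] by blast
  then show ?thesis by (simp add: x)
qed

definition AT :: "wt \<Rightarrow> bool" where
  "AT l = (case l of (a,b,c) \<Rightarrow> 2*a = 2*b-c \<or> 2*a = c-2*b \<or> 2*a = 2*c-b \<or> 2*a = b-2*c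
      \<or> 2*a = b+c \<or> 2*a = -b-c)"

lemma atypical_iff: "atypical l \<longleftrightarrow> XR l \<and> AT l"
proof -
  obtain a b c where x: "l = (a,b,c)" by (cases l) auto
  have oi: "odd_isotropic = {(1,1,0),(1,0,1),(1,-1,-1),(1,-1,0),(1,0,-1),(1,1,1)}"
  proof -
    have "odd_isotropic = wadd delta ` {eps1, eps2, eps3} \<union> (\<lambda>e. wadd delta (wneg e)) ` {eps1, eps2, eps3}"
      unfolding odd_isotropic_def by blast
    also have "\<dots> = {(1,1,0),(1,0,1),(1,-1,-1),(1,-1,0),(1,0,-1),(1,1,1)}"
      by (simp add: wadd_def wneg_def delta_def eps1_def eps2_def eps3_def insert_commute)
    finally show ?thesis .
  qed
  have "(\<exists>\<beta>\<in>odd_isotropic. form l \<beta> = 0) \<longleftrightarrow>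
     (-2*a + 2*b - c = 0 \<or> -2*a + 2*c - b = 0 \<or> -2*a - b - c = 0 \<or> -2*a - 2*b + c = 0
       \<or> -2*a - 2*c + b = 0 \<or> -2*a + b + c = 0)"
    unfolding oi x by (simp add: form_def; simp add: algebra_simps)
  also have "\<dots> \<longleftrightarrow> AT l" unfolding x AT_def by auto
  finally show ?thesis unfolding atypical_def Xrho_XR by blast
qed

lemma AT_s0: "AT (s0 x) = AT x"
proof -
  obtain a b c where x: "x = (a,b,c)" by (cases x) auto
  show ?thesis unfolding x AT_def s0_simp prod.case by auto
qed
lemma AT_s1: "AT (s1 x) = AT x"
proof -
  obtain a b c where x: "x = (a,b,c)" by (cases x) auto
  show ?thesis unfolding x AT_def s1_simp prod.case by auto
qed
lemma AT_s2: "AT (s2 x) = AT x"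
proof -
  obtain a b c where x: "x = (a,b,c)" by (cases x) auto
  show ?thesis unfolding x AT_def s2_simp prod.case by auto
qed

lemma atyp_W: "\<sigma> \<in> WeylG \<Longrightarrow> atypical (\<sigma> x) = atypical x"
  unfolding atypical_iff
  by (rule WeylG_inv) (simp_all only: XR_s0 XR_s1 XR_s2 AT_s0 AT_s1 AT_s2)

definition winv :: "wt \<Rightarrow> rat" where
  "winv l = (case l of (a,b,c) \<Rightarrow> (2*(2*b*b+2*c*c-2*b*c) - 4*a*a)/3)"

lemma winv_W: "\<sigma> \<in> WeylG \<Longrightarrow> winv (\<sigma> x) = winv x"
  using WeylG_inv[of "\<lambda>y. winv y = winv x" \<sigma> x]
  by (auto simp: winv_def algebra_simps split: prod.splits)

lemma f_c1: "n < k \<Longrightarrow> f k n = (- (2 * of_nat n + 1) / 2, - (of_nat n + of_nat k + 1), - (2 * of_nat k + 1))"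
  by (simp add: f_def Let_def)
lemma f_c2: "f k k = (- (2 * of_nat k + 1) / 2, - (2 * of_nat k + 1), - (2 * of_nat k + 1))"
  by (simp add: f_def Let_def)
lemma f_c3: "k < n \<Longrightarrow> n \<le> 3*k \<Longrightarrow> f k n = (- (2 * of_nat n + 1) / 2, - (2 * of_nat k + 1), - (of_nat n + of_nat k + 1))"
  by (simp add: f_def Let_def)
lemma f_c4: "n = 3*k+1 \<Longrightarrow> f k n = (- (2 * of_nat n + 1) / 2, - (2 * of_nat k + 1), - (4 * of_nat k + 2))"
  by (simp add: f_def Let_def)
lemma f_c5: "3*k+1 < n \<Longrightarrow> f k n = (- (2 * of_nat n + 1) / 2, - (of_nat n - of_nat k), - (of_nat n + of_nat k + 1))"
  by (simp add: f_def Let_def)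

lemma f_cases:
  fixes k n :: nat
  obtains "n < k" | "n = k" | "k < n" "n \<le> 3*k" | "n = 3*k+1" | "3*k+1 < n"
  by linarith

lemma XR_intro: "l = (of_int i + 1/2, of_int j, of_int k) \<Longrightarrow> XR l"
  unfolding XR_def by blast

lemma f_atyp: "atypical (f k n)"
proof -
  have h: "- (2 * of_nat n + 1) / 2 = (of_int (- int n - 1) + 1/2 :: rat)" by simp
  show ?thesis unfolding atypical_iff
  proof (cases rule: f_cases[where k=k and n=n])
    case 1 show "XR (f k n) \<and> AT (f k n)"
      unfolding f_c1[OF 1] by (intro conjI, rule XR_intro[where i="- int n - 1" and j="- int n - int k - 1" and k="- 2* int k - 1"], simp, simp add: AT_def field_simps)
  next
    case 2 show "XR (f k n) \<and> AT (f k n)"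
      unfolding 2 f_c2 by (intro conjI, rule XR_intro[where i="- int k - 1" and j="- 2* int k - 1" and k="- 2* int k - 1"], simp, simp add: AT_def field_simps)
  next
    case 3 show "XR (f k n) \<and> AT (f k n)"
      unfolding f_c3[OF 3] by (intro conjI, rule XR_intro[where i="- int n - 1" and k="- int n - int k - 1" and j="- 2* int k - 1"], simp, simp add: AT_def field_simps)
  next
    case 4 show "XR (f k n) \<and> AT (f k n)"
      unfolding f_c4[OF 4] by (intro conjI, rule XR_intro[where i="- int n - 1" and k="- 4* int k - 2" and j="- 2* int k - 1"], simp add: 4, simp add: AT_def field_simps 4)
  next
    case 5 show "XR (f k n) \<and> AT (f k n)"
      unfolding f_c5[OF 5] by (intro conjI, rule XR_intro[where i="- int n - 1" and k="- int n - int k - 1" and j="int k - int n"], simp, simp add: AT_def field_simps)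
  qed
qed

lemma f_winv: "winv (f k n) = (2 * of_nat k + 1)^2"
  by (cases rule: f_cases[where k=k and n=n])
     (auto simp: f_c1 f_c2 f_c3 f_c4 f_c5 winv_def field_simps power2_eq_square)


definition NP :: "rat \<Rightarrow> rat \<Rightarrow> nat" where
  "NP b c = (if 2*b-c > 0 then 1 else 0) + (if 2*c-b > 0 then 1 else 0) + (if b+c > 0 then 1 else 0)
     + (if c-b > 0 then 1 else 0) + (if b > 0 then 1 else 0) + (if c > 0 then 1 else 0)"

lemma red2: "\<exists>\<sigma>\<in>WeylG. \<exists>b' c'. (a,b,c) = \<sigma> (a,b',c') \<and> 2*b'-c' \<le> 0 \<and> c' \<le> b'"
proof (induction "NP b c" arbitrary: b c rule: less_induct)
  case less
  consider "c > b" | "c \<le> b" "2*b-c > 0" | "c \<le> b" "2*b - c \<le> 0" by linarith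
  then show ?case
  proof cases
    case 1
    have "NP c b < NP b c" using 1 unfolding NP_def by (simp split: if_split)
    from less[OF this] obtain \<sigma> b' c' where s: "\<sigma> \<in> WeylG" "(a,c,b) = \<sigma> (a,b',c')" "2*b'-c' \<le> 0" "c' \<le> b'"
      by blast
    have "(a,b,c) = (s1 \<circ> \<sigma>) (a,b',c')" using s(2) by (simp flip: s(2))
    then show ?thesis using s WeylG_s1 by blast
  next
    case 2
    have "NP (c-b) c < NP b c" using 2 unfolding NP_def by (simp split: if_split)
    from less[OF this] obtain \<sigma> b' c' where s: "\<sigma> \<in> WeylG" "(a,c-b,c) = \<sigma> (a,b',c')" "2*b'-c' \<le> 0" "c' \<le> b'"
      by blast
    have "(a,b,c) = (s2 \<circ> \<sigma>) (a,b',c')" by (simp flip: s(2))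
    then show ?thesis using s WeylG_s2 by blast
  next
    case 3
    have "(a,b,c) = id (a,b,c)" by simp
    then show ?thesis using 3 WeylG_id by blast
  qed
qed

lemma red: "\<exists>\<sigma>\<in>WeylG. \<exists>a' b' c'. l = \<sigma> (a',b',c') \<and> a' \<le> 0 \<and> 2*b'-c' \<le> 0 \<and> c' \<le> b'"
proof -
  obtain a b c where l: "l = (a,b,c)" by (cases l) auto
  show ?thesis
  proof (cases "a \<le> 0")
    case True then show ?thesis using red2[of a b c] l by blast
  next
    case False
    from red2[of "-a" b c] obtain \<sigma> b' c' where s: "\<sigma> \<in> WeylG" "(-a,b,c) = \<sigma> (-a,b',c')" "2*b'-c' \<le> 0" "c' \<le> b'"
      by blast
    have "l = (s0 \<circ> \<sigma>) (-a,b',c')" unfolding l by (simp flip: s(2))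
    then show ?thesis using s WeylG_s0 False by (metis neg_le_0_iff_le nle_le)
  qed
qed


lemma conv: "(A::rat) = of_int a \<Longrightarrow> B = of_int b \<Longrightarrow> (A = B) = (a = b)" by simp

lemma classify:
  assumes xr: "XR m" and at: "AT m" and a0: "fst m \<le> 0" and d1: "2*fst(snd m) - snd(snd m) \<le> 0"
    and d2: "snd (snd m) \<le> fst (snd m)"
  shows "\<exists>k n. m = f k n"
proof -
  obtain I J K :: int where m: "m = (of_int I + 1/2, of_int J, of_int K)" using xr unfolding XR_def by blast
  have "rat_of_int I < 0" using a0 unfolding m by simp
  then have "I < 0" by simp
  define n where "n = nat (-I-1)"
  have In: "I = - int n - 1" using \<open>I < 0\<close> unfolding n_def by simp
  have "rat_of_int (2*J - K) \<le> 0" using d1 unfolding m by simp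
  then have D1: "2*J - K \<le> 0" by linarith
  have "rat_of_int K \<le> of_int J" using d2 unfolding m by simp
  then have D2: "K \<le> J" by linarith
  have h: "2*(of_int I + 1/2) = (of_int (2*I+1)::rat)" by simp
  have "2*I+1 = 2*J-K \<or> 2*I+1 = K-2*J \<or> 2*I+1 = 2*K-J \<or> 2*I+1 = J-2*K \<or> 2*I+1 = J+K \<or> 2*I+1 = -J-K"
  proof -
    have c: "2*(of_int I + 1/2) = 2*of_int J - (of_int K::rat) \<longleftrightarrow> 2*I+1 = 2*J-K"
      "2*(of_int I + 1/2) = of_int K - 2*(of_int J::rat) \<longleftrightarrow> 2*I+1 = K-2*J"
      "2*(of_int I + 1/2) = 2*of_int K - (of_int J::rat) \<longleftrightarrow> 2*I+1 = 2*K-J"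
      "2*(of_int I + 1/2) = of_int J - 2*(of_int K::rat) \<longleftrightarrow> 2*I+1 = J-2*K"
      "2*(of_int I + 1/2) = of_int J + (of_int K::rat) \<longleftrightarrow> 2*I+1 = J+K"
      "2*(of_int I + 1/2) = - of_int J - (of_int K::rat) \<longleftrightarrow> 2*I+1 = -J-K"
      by (rule conv[OF h]; simp)+
    show ?thesis using at unfolding m AT_def prod.case c .
  qed
  then have cs: "2*J-K = -(2*int n+1) \<or> 2*K-J = -(2*int n+1) \<or> J+K = -(2*int n+1)"
    using D1 D2 In by linarith
  have mm: "m = (- (2 * of_nat n + 1) / 2, of_int J, of_int K)"
    unfolding m In by (simp add: field_simps)
  from cs show ?thesis
  proof (elim disjE)
    assume e: "2*J-K = -(2*int n+1)"
    define k where "k = nat (-J - int n - 1)"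
    have Jk: "J = - int n - int k - 1" and Kk: "K = - 2*int k - 1" and nk: "n \<le> k"
      using e D1 D2 unfolding k_def by linarith+
    show ?thesis
    proof (cases "n < k")
      case True
      have "m = f k n" unfolding f_c1[OF True] mm Jk Kk by simp
      then show ?thesis by blast
    next
      case False
      then have "n = k" using nk by simp
      have "m = f k k" unfolding f_c2 mm Jk Kk \<open>n = k\<close> by simp
      then show ?thesis by blast
    qed
  next
    assume e: "2*K-J = -(2*int n+1)"
    define k where "k = nat (-K - int n - 1)"
    have Kk: "K = - int n - int k - 1" and Jk: "J = - 2*int k - 1" and nk: "k \<le> n" "n \<le> 3*k+1"
      using e D1 D2 unfolding k_def by linarith+
    consider "n = k" | "k < n" "n \<le> 3*k" | "n = 3*k+1" using nk by linarith
    then show ?thesis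
    proof cases
      case 1
      have "m = f k k" unfolding f_c2 mm Jk Kk 1 by simp
      then show ?thesis by blast
    next
      case 2
      have "m = f k n" unfolding f_c3[OF 2] mm Jk Kk by simp
      then show ?thesis by blast
    next
      case 3
      have "m = f k n" unfolding f_c4[OF 3] mm Jk Kk by (simp add: 3)
      then show ?thesis by blast
    qed
  next
    assume e: "J+K = -(2*int n+1)"
    define k where "k = nat (-K - int n - 1)"
    have Kk: "K = - int n - int k - 1" and Jk: "J = int k - int n" and nk: "3*k+1 \<le> n"
      using e D1 D2 unfolding k_def by linarith+
    consider "n = 3*k+1" | "3*k+1 < n" using nk by linarith
    then show ?thesis
    proof cases
      case 1
      have "m = f k n" unfolding f_c4[OF 1] mm Jk Kk by (simp add: 1)
      then show ?thesis by blast
    next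
      case 2
      have "m = f k n" unfolding f_c5[OF 2] mm Jk Kk by simp
      then show ?thesis by blast
    qed
  qed
qed


lemma part3: "atypical l \<Longrightarrow> \<exists>\<sigma>\<in>WeylG. \<exists>k n. l = \<sigma> (f k n)"
proof -
  assume at: "atypical l"
  obtain \<sigma> a b c where s: "\<sigma> \<in> WeylG" "l = \<sigma> (a,b,c)" "a \<le> 0" "2*b-c \<le> 0" "c \<le> b"
    using red[of l] by blast
  have "atypical (a,b,c)" using at atyp_W[OF s(1)] s(2) by simp
  then obtain k n where "(a,b,c) = f k n"
    using classify[of "(a,b,c)"] s(3-5) unfolding atypical_iff by auto
  then show ?thesis using s by metis
qed

lemma kinj: "(2 * of_nat k + 1)^2 = ((2 * of_nat l + 1)^2::rat) \<Longrightarrow> k = l"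
proof -
  assume h: "(2 * of_nat k + 1)^2 = ((2 * of_nat l + 1)^2::rat)"
  have "(of_nat ((2*k+1)^2)::rat) = of_nat ((2*l+1)^2)" using h by simp
  then have "(2*k+1)^2 = (2*l+1)^2" by (simp only: of_nat_eq_iff)
  then have "2*k+1 = 2*l+1" by (simp add: power_eq_iff_eq_base)
  then show ?thesis by simp
qed

theorem lemma3p3:
  shows "(\<forall>k l. k \<noteq> l \<longrightarrow> WT k \<inter> WT l = {})
       \<and> (\<Union>k. WT k) = {l. atypical l}
       \<and> (\<forall>l. atypical l \<longrightarrow> (\<exists>\<sigma>\<in>WeylG. \<exists>k n. l = \<sigma> (f k n)))"
  proof (intro conjI)
  show "\<forall>k l. k \<noteq> l \<longrightarrow> WT k \<inter> WT l = {}"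
  proof (intro allI impI)
    fix k l :: nat assume kl: "k \<noteq> l"
    show "WT k \<inter> WT l = {}"
    proof (rule ccontr)
      assume "WT k \<inter> WT l \<noteq> {}"
      then obtain x \<sigma> \<tau> n m where "\<sigma> \<in> WeylG" "\<tau> \<in> WeylG" "x = \<sigma> (f k n)" "x = \<tau> (f l m)"
        unfolding WT_def by blast
      then have "winv (f k n) = winv (f l m)" using winv_W by metis
      then have "k = l" unfolding f_winv by (rule kinj)
      then show False using kl by simp
    qed
  qed
  show P3: "\<forall>l. atypical l \<longrightarrow> (\<exists>\<sigma>\<in>WeylG. \<exists>k n. l = \<sigma> (f k n))"
    using part3 by blast
  show "(\<Union>k. WT k) = {l. atypical l}"
  proof
    show "(\<Union>k. WT k) \<subseteq> {l. atypical l}"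
      unfolding WT_def using atyp_W f_atyp by blast
    show "{l. atypical l} \<subseteq> (\<Union>k. WT k)"
      unfolding WT_def using P3 by blast
  qed
qed

end
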